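(* Let $f_0,\ldots,f_{k-1}$, $k\ge2$, be diffeomorphisms of $S^n$ generating a minimal iterated function system, where $f_0$ is a north–south diffeomorphism with hyperbolic repelling fixed point $P_0$. Let $m$ be a stationary measure for the iterated function system with probabilities $p_0,\ldots,p_{k-1}$. Then $m(\{P_0\})=0$.
   Context: A north–south diffeomorphism of $S^n$ has a hyperbolic repelling fixed point $P_0$ and a hyperbolic attracting fixed point $Q_0$ whose basin of attraction is $S^n\setminus\{P_0\}$. The iterated function system is minimal if for every $x\in S^n$ some sequence $x_0=x$, $x_{j+1}=f_{i_j}(x_j)$ is dense in $S^n$. Given probabilities $p_i\in(0,1)$ with $\sum p_i=1$, a stationary measure is a Borel probability measure $m$ with $m=\sum_i p_i f_i m$, where $f_im(A)=m(f_i^{-1}(A))$. *)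

theory Defs
  imports "HOL-Analysis.Analysis" "HOL-Probability.Probability"
begin

text \<open>The n-sphere is the unit sphere of a Euclidean space 'a, with n = DIM('a) - 1.\<close>

definition C1_on_sphere :: "('a::euclidean_space \<Rightarrow> 'a) \<Rightarrow> bool" where
  "C1_on_sphere f \<longleftrightarrow>
     (\<exists>(U :: 'a set) F (F' :: 'a \<Rightarrow> 'a \<Rightarrow>\<^sub>L 'a). open U \<and> sphere 0 1 \<subseteq> U \<and>
        (\<forall>x\<in>sphere 0 1. F x = f x) \<and>
        (\<forall>x\<in>U. (F has_derivative blinfun_apply (F' x)) (at x)) \<and> continuous_on U F')"

definition sphere_diffeo :: "('a::euclidean_space \<Rightarrow> 'a) \<Rightarrow> bool" where
  "sphere_diffeo f \<longleftrightarrow> f ` sphere 0 1 = sphere 0 1 \<and> inj_on f (sphere 0 1) \<and>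
     C1_on_sphere f \<and> C1_on_sphere (the_inv_into (sphere 0 1) f)"

definition tangent_space :: "'a::euclidean_space \<Rightarrow> 'a set" where
  "tangent_space P = {v. v \<bullet> P = 0}"

text \<open>Eigenvalue of the complexification of a real linear map L on a real subspace T:
  L(u + i v) = \<lambda>(u + i v) with u, v in T not both zero.\<close>
definition cplx_eigenvalue_on :: "('a::real_vector \<Rightarrow> 'a) \<Rightarrow> 'a set \<Rightarrow> complex \<Rightarrow> bool" where
  "cplx_eigenvalue_on L T lam \<longleftrightarrow>
     (\<exists>u\<in>T. \<exists>v\<in>T. (u \<noteq> 0 \<or> v \<noteq> 0) \<and>
        L u = Re lam *\<^sub>R u - Im lam *\<^sub>R v \<and> L v = Im lam *\<^sub>R u + Re lam *\<^sub>R v)"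

definition hyp_repelling_fp :: "('a::euclidean_space \<Rightarrow> 'a) \<Rightarrow> 'a \<Rightarrow> bool" where
  "hyp_repelling_fp f P \<longleftrightarrow> P \<in> sphere 0 1 \<and> f P = P \<and>
     (\<exists>(U :: 'a set) (F :: 'a \<Rightarrow> 'a) L. open U \<and> sphere 0 1 \<subseteq> U \<and> (\<forall>x\<in>sphere 0 1. F x = f x) \<and>
        (F has_derivative L) (at P) \<and>
        (\<forall>lam. cplx_eigenvalue_on L (tangent_space P) lam \<longrightarrow> cmod lam > 1))"

definition hyp_attracting_fp :: "('a::euclidean_space \<Rightarrow> 'a) \<Rightarrow> 'a \<Rightarrow> bool" where
  "hyp_attracting_fp f Q \<longleftrightarrow> Q \<in> sphere 0 1 \<and> f Q = Q \<and>
     (\<exists>(U :: 'a set) (F :: 'a \<Rightarrow> 'a) L. open U \<and> sphere 0 1 \<subseteq> U \<and> (\<forall>x\<in>sphere 0 1. F x = f x) \<and>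
        (F has_derivative L) (at Q) \<and>
        (\<forall>lam. cplx_eigenvalue_on L (tangent_space Q) lam \<longrightarrow> cmod lam < 1))"

definition north_south :: "('a::euclidean_space \<Rightarrow> 'a) \<Rightarrow> 'a \<Rightarrow> 'a \<Rightarrow> bool" where
  "north_south f P Q \<longleftrightarrow> hyp_repelling_fp f P \<and> hyp_attracting_fp f Q \<and>
     {x \<in> sphere 0 1. (\<lambda>j. (f ^^ j) x) \<longlonglongrightarrow> Q} = sphere 0 1 - {P}"

primrec ifs_orbit :: "(nat \<Rightarrow> 'a \<Rightarrow> 'a) \<Rightarrow> (nat \<Rightarrow> nat) \<Rightarrow> 'a \<Rightarrow> nat \<Rightarrow> 'a" where
  "ifs_orbit f i x 0 = x"
| "ifs_orbit f i x (Suc j) = f (i j) (ifs_orbit f i x j)"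

definition minimal_ifs :: "nat \<Rightarrow> (nat \<Rightarrow> 'a::euclidean_space \<Rightarrow> 'a) \<Rightarrow> bool" where
  "minimal_ifs k f \<longleftrightarrow> (\<forall>x\<in>sphere 0 1. \<exists>i. (\<forall>j. i j < k) \<and>
      sphere 0 1 \<subseteq> closure (range (ifs_orbit f i x)))"

definition stationary_measure ::
  "nat \<Rightarrow> (nat \<Rightarrow> 'a::euclidean_space \<Rightarrow> 'a) \<Rightarrow> (nat \<Rightarrow> real) \<Rightarrow> 'a measure \<Rightarrow> bool" where
  "stationary_measure k f p m \<longleftrightarrow> prob_space m \<and>
     sets m = sets (restrict_space borel (sphere 0 1)) \<and>
     (\<forall>A\<in>sets m. emeasure m A =
        (\<Sum>i<k. ennreal (p i) * emeasure m (f i -` A \<inter> space m)))"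

end

theory Submission
  imports Defs
begin

lemma sphere_infinite:
  assumes "DIM('a::euclidean_space) \<ge> 2"
  shows "infinite (sphere (0::'a) 1)"
proof
  assume fin: "finite (sphere (0::'a) 1)"
  obtain b :: 'a where b: "b \<in> Basis" using nonempty_Basis by blast
  have "b \<in> sphere 0 1" "-b \<in> sphere 0 1" using b by auto
  moreover have "b \<noteq> -b"
  proof
    assume "b = -b"
    then have "b \<bullet> b = - (b \<bullet> b)" by (metis inner_minus_right)
    with b show False by simp
  qed
  moreover have "sphere (0::'a) 1 = {} \<or> (\<exists>a. sphere (0::'a) 1 = {a})"
    using connected_finite_iff_sing[OF connected_sphere[OF assms, of 0 1]] fin by auto
  ultimately show False by (metis empty_iff singletonD)
qed

theorem lemma3p4:
  fixes f :: "nat \<Rightarrow> 'a::euclidean_space \<Rightarrow> 'a"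
    and k :: nat and p :: "nat \<Rightarrow> real" and m :: "'a measure" and P0 Q0 :: 'a
  assumes "DIM('a) \<ge> 2"
    and "k \<ge> 2"
    and "\<forall>i<k. sphere_diffeo (f i)"
    and "minimal_ifs k f"
    and "north_south (f 0) P0 Q0"
    and "\<forall>i<k. 0 < p i \<and> p i < 1"
    and "(\<Sum>i<k. p i) = 1"
    and "stationary_measure k f p m"
  shows "emeasure m {P0} = 0"
proof (rule ccontr)
  assume nz: "emeasure m {P0} \<noteq> 0"
  define S where "S = sphere (0::'a) 1"
  have ps: "prob_space m" and sets_m: "sets m = sets (restrict_space borel S)"
   and stat: "\<forall>A\<in>sets m. emeasure m A = (\<Sum>i<k. ennreal (p i) * emeasure m (f i -` A \<inter> space m))"
    using assms(8) unfolding stationary_measure_def S_def by auto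
  interpret prob_space m by (rule ps)
  have space_m: "space m = S"
    using sets_eq_imp_space_eq[OF sets_m] by (simp add: space_restrict_space)
  have sing: "{x} \<in> sets m" if "x \<in> S" for x
    using that unfolding sets_m by (auto simp: sets_restrict_space image_iff intro!: bexI[of _ "{x}"])
  have fS: "f i ` S = S" "inj_on (f i) S" if "i < k" for i
    using assms(3) that unfolding sphere_diffeo_def S_def by auto
  define g where "g i = the_inv_into S (f i)" for i
  have gS: "g i y \<in> S" "f i (g i y) = y" if "i < k" "y \<in> S" for i y
    using fS[OF that(1)] that(2) unfolding g_def
    by (auto intro: the_inv_into_into f_the_inv_into_f)
  have pre: "f i -` {y} \<inter> S = {g i y}" if "i < k" "y \<in> S" for i y
    using gS[OF that] fS(2)[OF that(1)] by (auto simp: inj_on_def)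
  define \<mu> where "\<mu> x = measure m {x}" for x
  have mu_nn: "\<mu> x \<ge> 0" for x unfolding \<mu>_def by simp
  have eq: "\<mu> y = (\<Sum>i<k. p i * \<mu> (g i y))" if "y \<in> S" for y
  proof -
    have "ennreal (\<mu> y) = (\<Sum>i<k. ennreal (p i) * ennreal (\<mu> (g i y)))"
      using stat[rule_format, OF sing[OF that]] pre[OF _ that]
      by (simp add: space_m \<mu>_def emeasure_eq_measure)
    also have "\<dots> = ennreal (\<Sum>i<k. p i * \<mu> (g i y))"
      using assms(6) mu_nn
      by (simp add: ennreal_mult'[symmetric] less_imp_le, subst sum_ennreal) (auto simp: less_imp_le)
    finally have "ennreal (\<mu> y) = ennreal (\<Sum>i<k. p i * \<mu> (g i y))" .
    moreover have "(\<Sum>i<k. p i * \<mu> (g i y)) \<ge> 0"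
      using mu_nn assms(6) by (auto intro!: sum_nonneg simp: less_imp_le)
    ultimately show ?thesis using mu_nn[of y] by (simp add: ennreal_inj)
  qed
  have P0S: "P0 \<in> S"
    using assms(5) unfolding north_south_def hyp_repelling_fp_def S_def by auto
  define a where "a = \<mu> P0"
  have apos: "a > 0" using nz unfolding a_def \<mu>_def
    by (simp add: emeasure_eq_measure) (metis measure_nonneg order_le_less)
  define B where "B = {x\<in>S. \<mu> x \<ge> a}"
  have cardB: "card G \<le> 1 / a" if "G \<subseteq> B" "finite G" for G
  proof -
    have "card G * a \<le> (\<Sum>x\<in>G. \<mu> x)"
      using that sum_mono[of G "\<lambda>_. a" \<mu>] unfolding B_def by auto
    also have "\<dots> = measure m (\<Union>x\<in>G. {x})"
      unfolding \<mu>_def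
      by (rule measure_finite_Union[symmetric]) (use that sing in \<open>auto simp: B_def disjoint_family_on_def\<close>)
    also have "\<dots> \<le> 1" by simp
    finally show ?thesis using apos by (simp add: field_simps)
  qed
  have finB: "finite B"
    using finite_if_finite_subsets_card_bdd[of B "nat \<lfloor>1/a\<rfloor>"] cardB
    by (meson le_nat_floor)
  have P0B: "P0 \<in> B" using P0S unfolding B_def a_def by auto
  define M where "M = Max (\<mu> ` B)"
  have MB: "\<mu> x \<le> M" if "x \<in> B" for x using finB that unfolding M_def by auto
  have Mge: "M \<ge> a" using MB[OF P0B] unfolding a_def by simp
  have Mle: "\<mu> x \<le> M" if "x \<in> S" for x
    using MB[of x] Mge that unfolding B_def by force
  define A where "A = {x\<in>S. \<mu> x = M}"
  have AB: "A \<subseteq> B" unfolding A_def B_def using Mge by auto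
  have finA: "finite A" using finite_subset[OF AB finB] .
  have "M \<in> \<mu> ` B" unfolding M_def using finB P0B by (intro Max_in) auto
  then obtain x0 where x0: "x0 \<in> A" unfolding A_def B_def by auto
  have gA: "g i x \<in> A" if "i < k" "x \<in> A" for i x
  proof -
    have xS: "x \<in> S" using that A_def by auto
    have "(\<Sum>j<k. p j * (M - \<mu> (g j x))) = (\<Sum>j<k. p j) * M - (\<Sum>j<k. p j * \<mu> (g j x))"
      by (simp add: sum_subtractf algebra_simps sum_distrib_left)
    also have "\<dots> = 0" using eq[OF xS] that(2) assms(7) unfolding A_def by simp
    finally have "\<forall>j\<in>{..<k}. p j * (M - \<mu> (g j x)) = 0"
      using assms(6) Mle gS(1)[OF _ xS]
      by (subst sum_nonneg_eq_0_iff[symmetric]) (auto intro!: sum_nonneg mult_nonneg_nonneg)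
    then have "p i * (M - \<mu> (g i x)) = 0" using that(1) lessThan_iff by blast
    moreover have "p i \<noteq> 0" using that(1) assms(6) by auto
    ultimately have "\<mu> (g i x) = M" by simp
    then show ?thesis using gS(1)[OF that(1) xS] unfolding A_def by auto
  qed
  have fA: "f i y \<in> A" if "i < k" "y \<in> A" for i y
  proof -
    note yA = that(2)
    have gim: "g i ` A \<subseteq> A" using gA[OF that(1)] by auto
    have inj: "inj_on (g i) A"
    proof (rule inj_onI)
      fix u v assume "u \<in> A" "v \<in> A" "g i u = g i v"
      then have "u \<in> S" "v \<in> S" "g i u = g i v" by (simp_all add: A_def)
      then show "u = v" using gS(2)[OF that(1)] by metis
    qed
    have "g i ` A = A"
      using card_subset_eq[OF finA gim] card_image[OF inj] by simp
    then obtain z where "z \<in> A" "y = g i z" using yA by auto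
    moreover have "z \<in> S" using \<open>z \<in> A\<close> by (simp add: A_def)
    ultimately show ?thesis using gS(2)[OF that(1)] by metis
  qed
  have x0S: "x0 \<in> S" using x0 by (simp add: A_def)
  obtain idx where idx: "\<forall>j. idx j < k" "S \<subseteq> closure (range (ifs_orbit f idx x0))"
    using assms(4) x0S unfolding minimal_ifs_def S_def by blast
  have orb: "ifs_orbit f idx x0 j \<in> A" for j
  proof (induction j)
    case 0 then show ?case using x0 by simp
  next
    case (Suc j) then show ?case using fA[OF spec[OF idx(1), of j]] by simp
  qed
  have "range (ifs_orbit f idx x0) \<subseteq> A" using orb by blast
  then have "closure (range (ifs_orbit f idx x0)) \<subseteq> closure A" by (rule closure_mono)
  also have "closure A = A" by (rule closure_closed[OF finite_imp_closed[OF finA]])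
  finally have "S \<subseteq> A" using idx(2) by (rule order_trans[rotated])
  then have "finite S" by (rule finite_subset) (rule finA)
  then show False using sphere_infinite[OF assms(1)] unfolding S_def by simp
qed

end
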